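(* Let $P_0,P_1,P_2$ be jointly distributed nonnegative random variables with $\mathbb E[P_1]>0$, and let $0<\varepsilon\le 1/10$. If $\mathbb E[P_0]\le\varepsilon$, $\mathbb E[P_1]\ge 1-\varepsilon$ and $\mathbb E[P_2]\le 1$, then there exists an outcome $o$ such that $P_0(o)\le\delta\cdot P_1(o)$, $P_2(o)\le(1+\delta)\cdot P_1(o)$, and $P_1(o)>0$, where $\delta=2\sqrt{\varepsilon}$. *)

theory Defs
  imports "HOL-Probability.Probability"
begin

end

theory Submission
  imports Defs
begin

theorem fact3p2:
  fixes M :: "'a measure" and P0 P1 P2 :: "'a \<Rightarrow> real" and \<epsilon> :: real
  assumes "prob_space M"
    and "P0 \<in> borel_measurable M" and "P1 \<in> borel_measurable M" and "P2 \<in> borel_measurable M"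
    and "\<And>x. x \<in> space M \<Longrightarrow> P0 x \<ge> 0"
    and "\<And>x. x \<in> space M \<Longrightarrow> P1 x \<ge> 0"
    and "\<And>x. x \<in> space M \<Longrightarrow> P2 x \<ge> 0"
    and "(\<integral>\<^sup>+ x. ennreal (P1 x) \<partial>M) > 0"
    and "0 < \<epsilon>" and "\<epsilon> \<le> 1/10"
    and "(\<integral>\<^sup>+ x. ennreal (P0 x) \<partial>M) \<le> ennreal \<epsilon>"
    and "(\<integral>\<^sup>+ x. ennreal (P1 x) \<partial>M) \<ge> ennreal (1 - \<epsilon>)"
    and "(\<integral>\<^sup>+ x. ennreal (P2 x) \<partial>M) \<le> 1"
  shows "\<exists>\<omega>\<in>space M. P0 \<omega> \<le> (2 * sqrt \<epsilon>) * P1 \<omega>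
            \<and> P2 \<omega> \<le> (1 + 2 * sqrt \<epsilon>) * P1 \<omega> \<and> P1 \<omega> > 0"
proof (rule ccontr)
  assume H: "\<not> ?thesis"
  define s where "s = sqrt \<epsilon>"
  define d where "d = 2 * s"
  define c where "c = (1 + d) / d"
  have s0: "s > 0" using assms(9) by (simp add: s_def)
  have ss: "s * s = \<epsilon>" using assms(9) by (simp add: s_def)
  have s1: "s \<le> 1/3"
  proof (rule ccontr)
    assume "\<not> s \<le> 1/3"
    hence "s * s > 1/3 * (1/3)" by (intro mult_strict_mono) auto
    thus False using ss assms(10) by simp
  qed
  have d0: "d > 0" using s0 by (simp add: d_def)
  have c0: "c \<ge> 0" using d0 by (simp add: c_def)
  have pt: "ennreal ((1 + d) * P1 x) \<le> ennreal (P2 x + c * P0 x)" if x: "x \<in> space M" for x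
  proof -
    have "(1 + d) * P1 x \<le> P2 x + c * P0 x"
    proof (cases "P1 x > 0")
      case False
      hence "P1 x = 0" using assms(6)[OF x] by linarith
      moreover have "0 \<le> c * P0 x" using assms(5)[OF x] c0 by simp
      ultimately show ?thesis using assms(7)[OF x] by simp
    next
      case True
      hence "\<not> P0 x \<le> d * P1 x \<or> \<not> P2 x \<le> (1 + d) * P1 x"
        using H x unfolding d_def s_def by blast
      thus ?thesis
      proof
        assume a: "\<not> P0 x \<le> d * P1 x"
        have "c * P0 x \<ge> c * (d * P1 x)" using a c0 by (intro mult_left_mono) auto
        also have "c * (d * P1 x) = (1 + d) * P1 x" using d0 by (simp add: c_def)
        finally show ?thesis using assms(7)[OF x] by linarith
      next
        assume "\<not> P2 x \<le> (1 + d) * P1 x"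
        moreover have "0 \<le> c * P0 x" using assms(5)[OF x] c0 by simp
        ultimately show ?thesis by linarith
      qed
    qed
    thus ?thesis by (rule ennreal_leI)
  qed
  have "ennreal (1 + d) * ennreal (1 - \<epsilon>) \<le> ennreal (1 + d) * (\<integral>\<^sup>+ x. ennreal (P1 x) \<partial>M)"
    using assms(12) by (intro mult_left_mono) auto
  also have "\<dots> = (\<integral>\<^sup>+ x. ennreal (1 + d) * ennreal (P1 x) \<partial>M)"
    using assms(3) by (simp add: nn_integral_cmult)
  also have "\<dots> = (\<integral>\<^sup>+ x. ennreal ((1 + d) * P1 x) \<partial>M)"
    using d0 assms(6) by (intro nn_integral_cong) (simp add: ennreal_mult)
  also have "\<dots> \<le> (\<integral>\<^sup>+ x. ennreal (P2 x + c * P0 x) \<partial>M)"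
    by (rule nn_integral_mono) (rule pt)
  also have "\<dots> = (\<integral>\<^sup>+ x. ennreal (P2 x) + ennreal c * ennreal (P0 x) \<partial>M)"
    by (rule nn_integral_cong) (simp add: assms(5,7) c0 ennreal_mult ennreal_plus)
  also have "\<dots> = (\<integral>\<^sup>+ x. ennreal (P2 x) \<partial>M) + ennreal c * (\<integral>\<^sup>+ x. ennreal (P0 x) \<partial>M)"
    using assms(2,4) by (simp add: nn_integral_add nn_integral_cmult)
  also have "\<dots> \<le> 1 + ennreal c * ennreal \<epsilon>"
    using assms(11,13) by (intro add_mono mult_left_mono) auto
  finally have F: "ennreal (1 + d) * ennreal (1 - \<epsilon>) \<le> 1 + ennreal c * ennreal \<epsilon>" .
  have e1: "ennreal (1 + d) * ennreal (1 - \<epsilon>) = ennreal ((1 + d) * (1 - \<epsilon>))"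
    using d0 assms(10) by (simp add: ennreal_mult)
  have e2: "1 + ennreal c * ennreal \<epsilon> = ennreal (1 + c * \<epsilon>)"
    using c0 assms(9) by (simp add: ennreal_mult ennreal_plus)
  have "ennreal ((1 + d) * (1 - \<epsilon>)) \<le> ennreal (1 + c * \<epsilon>)" using F e1 e2 by simp
  hence ineq: "(1 + d) * (1 - \<epsilon>) \<le> 1 + c * \<epsilon>"
    using c0 assms(9) by (subst (asm) ennreal_le_iff) auto
  have "c * \<epsilon> = (1 + 2 * s) * s / 2" using s0 unfolding c_def d_def ss[symmetric] by (simp add: field_simps)
  hence "(1 + 2 * s) * (1 - s * s) \<le> 1 + (1 + 2 * s) * s / 2" using ineq ss d_def by simp
  moreover have "s * s \<le> 1/3 * s" using s0 s1 by (intro mult_right_mono) auto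
  hence "2 * s + 2 * s * s < 3/2" using s1 by linarith
  hence "s * (2 * s + 2 * s * s) < s * (3/2)" using s0 by (intro mult_strict_left_mono) auto
  ultimately show False by (simp add: algebra_simps, simp add: field_simps)
qed

end
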